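(* Let $-1<\lambda\le0$. Then the function $t\mapsto-(\phi_\lambda^{[-1]})'(t)$ is non-increasing on $(0,\infty)$. Furthermore, if $-1<\lambda\le-1/2$ this function is convex on $(0,\infty)$, whereas if $-1/2<\lambda\le0$ it fails to be convex on $(0,\infty)$.
   Context: For $\lambda\neq-1,0$, $\phi_\lambda(x)=\frac{1}{\lambda(\lambda+1)}(x^{\lambda+1}-x+\lambda(1-x))$, and $\phi_0(x)=1-x+x\log x$, for $x\ge0$ (value at $0$ as a limit). For $-1<\lambda\le0$, $\phi_\lambda(0)=1/(\lambda+1)$ and $\phi_\lambda$ is convex and strictly decreasing on $[0,1]$ with $\phi_\lambda(1)=0$. The pseudoinverse is $\phi_\lambda^{[-1]}(t)=\phi_\lambda^{-1}(t)$ (inverse of $\phi_\lambda|_{[0,1]}$) for $0\le t<\phi_\lambda(0)$ and $\phi_\lambda^{[-1]}(t)=0$ for $t\ge\phi_\lambda(0)$; for these $\lambda$ it is differentiable on $(0,\infty)$. *)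

theory Defs
  imports "HOL-Analysis.Analysis"
begin

text \<open>Cressie-Read type generator phi_lambda on [0,inf). For lambda not in {-1,0}:
  (x^(lambda+1) - x + lambda(1-x)) / (lambda(lambda+1)); for lambda = 0: 1 - x + x log x.
  At x = 0 the value is the limit (for lambda > -1 this equals the formula with 0^(lambda+1) = 0,
  resp. 0 log 0 = 0).\<close>
definition phi :: "real \<Rightarrow> real \<Rightarrow> real" where
  "phi lam x =
     (if lam = 0 then (if x = 0 then 1 else 1 - x + x * ln x)
      else (if x = 0 then (0 - 0 + lam) / (lam * (lam + 1))
            else (x powr (lam + 1) - x + lam * (1 - x)) / (lam * (lam + 1))))"

definition phi_pinv :: "real \<Rightarrow> real \<Rightarrow> real" where
  "phi_pinv lam t =
     (if 0 \<le> t \<and> t < phi lam 0 then (THE x. x \<in> {0..1} \<and> phi lam x = t) else 0)"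

end

theory Submission
  imports Defs "HOL-Real_Asymp.Real_Asymp"
begin

definition dphi :: "real \<Rightarrow> real \<Rightarrow> real" where
  "dphi lam x = (if lam = 0 then ln x else (x powr lam - 1) / lam)"

lemma phi_eq_nz: "lam \<noteq> 0 \<Longrightarrow> phi lam = (\<lambda>x. (x powr (lam + 1) - x + lam * (1 - x)) / (lam * (lam + 1)))"
  by (rule ext) (simp add: phi_def)

lemma phi_eq_z: "phi 0 = (\<lambda>x. 1 - x + x * ln x)"
  by (rule ext) (simp add: phi_def)

lemma phi_0: "-1 < lam \<Longrightarrow> phi lam 0 = 1 / (lam + 1)"
  by (auto simp: phi_def)

lemma phi_1: "-1 < lam \<Longrightarrow> phi lam 1 = 0"
  by (auto simp: phi_def)

lemma phi_deriv:
  assumes "-1 < lam" "x > 0"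
  shows "(phi lam has_real_derivative dphi lam x) (at x)"
proof (cases "lam = 0")
  case True
  show ?thesis unfolding True phi_eq_z dphi_def using assms
    by (auto intro!: derivative_eq_intros)
next
  case False
  have "lam + 1 \<noteq> 0" using assms by auto
  have e: "((lam + 1) * x powr lam - 1 - lam) / (lam * (lam + 1)) = (x powr lam - 1) / lam"
  proof -
    have "(lam + 1) * x powr lam - 1 - lam = (lam + 1) * (x powr lam - 1)" by (simp add: algebra_simps)
    then show ?thesis using \<open>lam + 1 \<noteq> 0\<close> by simp
  qed
  show ?thesis unfolding phi_eq_nz[OF False] dphi_def using assms False
    by (auto intro!: derivative_eq_intros simp: e)
qed

lemma phi_right0:
  assumes "-1 < lam"
  shows "(phi lam \<longlongrightarrow> phi lam 0) (at_right 0)"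
proof (cases "lam = 0")
  case True
  have "((\<lambda>x::real. 1 - x + x * ln x) \<longlongrightarrow> 1) (at_right 0)" by real_asymp
  then show ?thesis unfolding True phi_eq_z by simp
next
  case False
  have ev: "\<forall>\<^sub>F x in at_right (0::real). 0 \<le> x"
    by (rule eventually_mono[OF eventually_at_right_less]) auto
  have "((\<lambda>x. (x powr (lam + 1) - x + lam * (1 - x)) / (lam * (lam + 1))) \<longlongrightarrow>
      ((0::real) powr (lam + 1) - 0 + lam * (1 - 0)) / (lam * (lam + 1))) (at_right 0)"
    using assms ev False by (intro tendsto_intros) auto
  then show ?thesis unfolding phi_eq_nz[OF False] by simp
qed

lemma phi_cont:
  assumes "-1 < lam"
  shows "continuous_on {0..1} (phi lam)"
proof (rule continuous_on_IccI)
  show "(phi lam \<longlongrightarrow> phi lam 0) (at_right 0)" by (rule phi_right0[OF assms])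
  have "isCont (phi lam) 1" using phi_deriv[OF assms, of 1] DERIV_isCont by auto
  then show "(phi lam \<longlongrightarrow> phi lam 1) (at_left 1)"
    by (simp add: isCont_def filterlim_at_split)
  fix x :: real assume "0 < x" "x < 1"
  then show "phi lam \<midarrow>x\<rightarrow> phi lam x" using phi_deriv[OF assms, of x] DERIV_isCont isCont_def by blast
qed simp

lemma dphi_neg:
  assumes "-1 < lam" "lam \<le> 0" "0 < x" "x < 1"
  shows "dphi lam x < 0"
proof (cases "lam = 0")
  case True then show ?thesis using assms by (simp add: dphi_def)
next
  case False
  then have "lam < 0" using assms by auto
  have "x powr lam > 1 powr lam" using powr_less_mono2_neg[OF \<open>lam < 0\<close> assms(3,4)] .
  then show ?thesis using \<open>lam < 0\<close> by (simp add: dphi_def divide_neg_pos field_simps)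
qed

lemma phi_strict:
  assumes "-1 < lam" "lam \<le> 0" "0 \<le> a" "a < b" "b \<le> 1"
  shows "phi lam b < phi lam a"
proof (rule DERIV_neg_imp_decreasing_open[OF assms(4)])
  fix x assume "a < x" "x < b"
  then show "\<exists>y. DERIV (phi lam) x :> y \<and> y < 0"
    using assms phi_deriv dphi_neg by (intro exI[of _ "dphi lam x"]) auto
next
  show "continuous_on {a..b} (phi lam)"
    using phi_cont[OF assms(1)] by (rule continuous_on_subset) (use assms in auto)
qed

lemma phi_inj:
  assumes "-1 < lam" "lam \<le> 0" "x \<in> {0..1}" "y \<in> {0..1}" "phi lam x = phi lam y"
  shows "x = y"
proof (rule ccontr)
  assume "x \<noteq> y"
  then consider "x < y" | "y < x" by linarith
  then show False
    using phi_strict[OF assms(1,2), of x y] phi_strict[OF assms(1,2), of y x] assms by cases auto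
qed

lemma phi_range:
  assumes "-1 < lam" "lam \<le> 0" "x \<in> {0..1}"
  shows "0 \<le> phi lam x" "phi lam x \<le> phi lam 0" "0 < x \<Longrightarrow> phi lam x < phi lam 0"
    "x < 1 \<Longrightarrow> 0 < phi lam x"
proof -
  show "0 < x \<Longrightarrow> phi lam x < phi lam 0" using phi_strict[OF assms(1,2), of 0 x] assms by auto
  then show "phi lam x \<le> phi lam 0" using assms(3) by (cases "x = 0") force+
  show "x < 1 \<Longrightarrow> 0 < phi lam x" using phi_strict[OF assms(1,2), of x 1] assms phi_1 by auto
  then show "0 \<le> phi lam x" using phi_1[OF assms(1)] assms(3) by (cases "x = 1") force+
qed

lemma pinv_phi:
  assumes "-1 < lam" "lam \<le> 0" "x \<in> {0..1}"
  shows "phi_pinv lam (phi lam x) = x"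
proof (cases "x = 0")
  case True then show ?thesis by (simp add: phi_pinv_def)
next
  case False
  then have "0 < x" using assms by auto
  have r: "0 \<le> phi lam x" "phi lam x < phi lam 0" using phi_range[OF assms] \<open>0 < x\<close> by auto
  have "(THE y. y \<in> {0..1} \<and> phi lam y = phi lam x) = x"
    using assms phi_inj[OF assms(1,2)] by (intro the_equality) auto
  then show ?thesis using r by (simp add: phi_pinv_def)
qed

lemma pinv_props:
  assumes "-1 < lam" "lam \<le> 0" "0 \<le> t" "t < phi lam 0"
  shows "phi_pinv lam t \<in> {0<..1}" "phi lam (phi_pinv lam t) = t" "0 < t \<Longrightarrow> phi_pinv lam t < 1"
proof -
  have "\<exists>x. 0 \<le> x \<and> x \<le> 1 \<and> phi lam x = t"
    using assms phi_cont[OF assms(1)] phi_1[OF assms(1)] by (intro IVT2') auto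
  then obtain x where x: "x \<in> {0..1}" "phi lam x = t" by auto
  then have px: "phi_pinv lam t = x" using pinv_phi[OF assms(1,2)] by blast
  have "x \<noteq> 0" using x assms by auto
  then show "phi_pinv lam t \<in> {0<..1}" using px x by auto
  show "phi lam (phi_pinv lam t) = t" using px x by simp
  show "0 < t \<Longrightarrow> phi_pinv lam t < 1" using px x phi_1[OF assms(1)] by (cases "x = 1") auto
qed

lemma pinv_big: "phi lam 0 \<le> t \<Longrightarrow> phi_pinv lam t = 0"
  by (simp add: phi_pinv_def)

lemma phi_image:
  assumes "-1 < lam" "lam \<le> 0"
  shows "phi lam ` {0..1} = {0..phi lam 0}"
proof
  show "phi lam ` {0..1} \<subseteq> {0..phi lam 0}" using phi_range[OF assms] by auto
  show "{0..phi lam 0} \<subseteq> phi lam ` {0..1}"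
  proof
    fix t assume t: "t \<in> {0..phi lam 0}"
    show "t \<in> phi lam ` {0..1}"
    proof (cases "t = phi lam 0")
      case True then show ?thesis by auto
    next
      case False
      then have "t < phi lam 0" using t by auto
      then show ?thesis using pinv_props[OF assms, of t] t
        by (metis atLeastAtMost_iff greaterThanAtMost_iff image_eqI less_imp_le)
    qed
  qed
qed

lemma pinv_cont:
  assumes "-1 < lam" "lam \<le> 0"
  shows "continuous_on {0..phi lam 0} (phi_pinv lam)"
  using continuous_on_inv[OF phi_cont[OF assms(1)] compact_Icc, of "phi_pinv lam"]
    pinv_phi[OF assms] phi_image[OF assms] by auto

lemma c_pos: "-1 < lam \<Longrightarrow> 0 < phi lam 0"
  by (simp add: phi_0)

lemma pinv_deriv_in:
  assumes "-1 < lam" "lam \<le> 0" "0 < t" "t < phi lam 0"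
  shows "(phi_pinv lam has_real_derivative inverse (dphi lam (phi_pinv lam t))) (at t)"
proof (rule DERIV_inverse_function[where a=0 and b="phi lam 0"])
  have p: "phi_pinv lam t \<in> {0<..1}" "phi_pinv lam t < 1" using pinv_props[OF assms(1,2), of t] assms by auto
  show "(phi lam has_real_derivative dphi lam (phi_pinv lam t)) (at (phi_pinv lam t))"
    using phi_deriv[OF assms(1)] p by auto
  show "dphi lam (phi_pinv lam t) \<noteq> 0" using dphi_neg[OF assms(1,2)] p by force
  show "\<And>y. 0 < y \<Longrightarrow> y < phi lam 0 \<Longrightarrow> phi lam (phi_pinv lam y) = y"
    using pinv_props[OF assms(1,2)] by auto
  show "isCont (phi_pinv lam) t"
    using continuous_on_interior[OF pinv_cont[OF assms(1,2)]] assms by auto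
qed (use assms in auto)

lemma pinv_deriv_out:
  assumes "phi lam 0 < t"
  shows "(phi_pinv lam has_real_derivative 0) (at t)"
proof (rule has_field_derivative_transform_within_open[of "\<lambda>_. 0" 0 t "{phi lam 0<..}"])
qed (use assms pinv_big in auto)

lemma aux_div: "(x::real) \<noteq> 0 \<Longrightarrow> x / (x * D / L) = L / D"
  by (simp add: divide_divide_eq_right)

lemma Q_lim:
  assumes "-1 < lam" "lam \<le> 0"
  shows "((\<lambda>x. x / (phi lam 0 - phi lam x)) \<longlongrightarrow> 0) (at_right 0)"
proof (cases "lam = 0")
  case True
  have "((\<lambda>x::real. x / (1 - (1 - x + x * ln x))) \<longlongrightarrow> 0) (at_right 0)" by real_asymp
  then show ?thesis unfolding True phi_eq_z by simp
next
  case False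
  have l1: "lam + 1 \<noteq> 0" using assms by auto
  have ev: "\<forall>\<^sub>F x in at_right (0::real). 0 \<le> x"
    by (rule eventually_mono[OF eventually_at_right_less]) auto
  have lim: "((\<lambda>x. lam * (lam + 1) * x powr (-lam) / ((1 + lam) * x powr (-lam) - 1)) \<longlongrightarrow>
     lam * (lam + 1) * 0 powr (-lam) / ((1 + lam) * 0 powr (-lam) - 1)) (at_right 0)"
    using assms False ev by (intro tendsto_intros) auto
  have ev2: "\<forall>\<^sub>F x in at_right (0::real). lam * (lam + 1) * x powr (-lam) / ((1 + lam) * x powr (-lam) - 1)
     = x / (phi lam 0 - phi lam x)"
  proof (rule eventually_mono[OF eventually_at_right_less], goal_cases)
    case (1 x)
    have xp: "x powr (lam + 1) = x * x powr lam" using \<open>0 < x\<close> by (simp add: powr_add abs_of_pos)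
    have inv: "x powr lam * x powr (-lam) = 1" using \<open>0 < x\<close> by (simp add: powr_minus)
    have "phi lam 0 - phi lam x = ((0 powr (lam+1) - 0 + lam*(1-0)) - (x powr (lam+1) - x + lam*(1-x)))/(lam*(lam+1))"
      unfolding phi_eq_nz[OF False] by (rule diff_divide_distrib[symmetric])
    also have "\<dots> = ((1 + lam) * x - x powr (lam + 1)) / (lam * (lam + 1))" by (simp add: algebra_simps)
    also have "\<dots> = x * ((1 + lam) - x powr lam) / (lam * (lam + 1))" unfolding xp by (simp add: algebra_simps)
    finally have e: "phi lam 0 - phi lam x = x * ((1 + lam) - x powr lam) / (lam * (lam + 1))" .
    have pos: "x powr (-lam) > 0" using \<open>0 < x\<close> by simp
    show ?case
    proof (cases "(1 + lam) - x powr lam = 0")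
      case True
      then have "(1 + lam) * x powr (-lam) - 1 = 0" using inv by (simp add: algebra_simps)
      then show ?thesis using True e by simp
    next
      case F: False
      have "(1 + lam) * x powr (-lam) - 1 = x powr (-lam) * ((1 + lam) - x powr lam)"
        using inv by (simp add: algebra_simps)
      then have "lam * (lam + 1) * x powr (-lam) / ((1 + lam) * x powr (-lam) - 1)
          = lam * (lam + 1) * x powr (-lam) / (x powr (-lam) * ((1 + lam) - x powr lam))" by simp
      also have "\<dots> = lam * (lam + 1) / ((1 + lam) - x powr lam)" using pos by simp
      also have "\<dots> = x / (x * ((1 + lam) - x powr lam) / (lam * (lam + 1)))"
        using \<open>0 < x\<close> by (rule aux_div[symmetric, OF less_imp_neq[symmetric]])
      finally show ?thesis using e by simp
    qed
  qed
  show ?thesis using Lim_transform_eventually[OF lim ev2] assms by simp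
qed

lemma pinv_left_lim:
  assumes "-1 < lam" "lam \<le> 0"
  shows "filterlim (phi_pinv lam) (at_right 0) (at_left (phi lam 0))"
proof (rule tendsto_imp_filterlim_at_right)
  have "(phi_pinv lam \<longlongrightarrow> phi_pinv lam (phi lam 0)) (at_left (phi lam 0))"
    using continuous_on_Icc_at_leftD[OF pinv_cont[OF assms] c_pos[OF assms(1)]] .
  then show "(phi_pinv lam \<longlongrightarrow> 0) (at_left (phi lam 0))" by (simp add: pinv_big)
  show "\<forall>\<^sub>F x in at_left (phi lam 0). 0 < phi_pinv lam x"
    using eventually_at_left_real[OF c_pos[OF assms(1)]]
    by (rule eventually_mono) (use pinv_props[OF assms] in auto)
qed

lemma pinv_deriv_c:
  assumes "-1 < lam" "lam \<le> 0"
  shows "(phi_pinv lam has_real_derivative 0) (at (phi lam 0))"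
  unfolding has_field_derivative_iff
proof (rule filterlim_split_at)
  let ?c = "phi lam 0"
  show "((\<lambda>y. (phi_pinv lam y - phi_pinv lam ?c) / (y - ?c)) \<longlongrightarrow> 0) (at_right ?c)"
  proof (rule tendsto_eventually)
    show "\<forall>\<^sub>F y in at_right ?c. (phi_pinv lam y - phi_pinv lam ?c) / (y - ?c) = 0"
      by (rule eventually_mono[OF eventually_at_right_less]) (simp add: pinv_big)
  qed
  have lim: "((\<lambda>y. - (phi_pinv lam y / (?c - phi lam (phi_pinv lam y)))) \<longlongrightarrow> - 0) (at_left ?c)"
    by (intro tendsto_minus filterlim_compose[OF Q_lim[OF assms] pinv_left_lim[OF assms]])
  have ev: "\<forall>\<^sub>F y in at_left ?c. - (phi_pinv lam y / (?c - phi lam (phi_pinv lam y)))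
      = (phi_pinv lam y - phi_pinv lam ?c) / (y - ?c)"
  proof (rule eventually_mono[OF eventually_at_left_real[OF c_pos[OF assms(1)]]])
    fix y assume "y \<in> {0<..<?c}"
    then have "phi lam (phi_pinv lam y) = y" using pinv_props[OF assms] by auto
    then show "- (phi_pinv lam y / (?c - phi lam (phi_pinv lam y)))
      = (phi_pinv lam y - phi_pinv lam ?c) / (y - ?c)"
      by (simp add: pinv_big minus_divide_right)
  qed
  show "((\<lambda>y. (phi_pinv lam y - phi_pinv lam ?c) / (y - ?c)) \<longlongrightarrow> 0) (at_left ?c)"
    using Lim_transform_eventually[OF lim ev] by simp
qed

definition G :: "real \<Rightarrow> real \<Rightarrow> real" where
  "G lam t = (if t < phi lam 0 then - inverse (dphi lam (phi_pinv lam t)) else 0)"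

lemma deriv_eq:
  assumes "-1 < lam" "lam \<le> 0" "0 < t"
  shows "- deriv (phi_pinv lam) t = G lam t"
proof -
  consider "t < phi lam 0" | "t = phi lam 0" | "t > phi lam 0" by linarith
  then show ?thesis
  proof cases
    case 1 then show ?thesis using DERIV_imp_deriv[OF pinv_deriv_in[OF assms 1]] by (simp add: G_def)
  next
    case 2 then show ?thesis using DERIV_imp_deriv[OF pinv_deriv_c[OF assms(1,2)]] by (simp add: G_def)
  next
    case 3 then show ?thesis using DERIV_imp_deriv[OF pinv_deriv_out[OF 3]] by (simp add: G_def)
  qed
qed

lemma dphi_mono:
  assumes "-1 < lam" "lam \<le> 0" "0 < x" "x \<le> y"
  shows "dphi lam x \<le> dphi lam y"
proof (cases "lam = 0")
  case True then show ?thesis using assms by (simp add: dphi_def)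
next
  case False
  then have "lam < 0" using assms by auto
  have "y powr lam \<le> x powr lam"
    using assms \<open>lam < 0\<close> by (cases "x = y") (auto intro!: less_imp_le[OF powr_less_mono2_neg])
  then show ?thesis using \<open>lam < 0\<close> False by (simp add: dphi_def divide_right_mono_neg)
qed

lemma G_nonneg:
  assumes "-1 < lam" "lam \<le> 0" "0 < t"
  shows "0 \<le> G lam t"
proof (cases "t < phi lam 0")
  case True
  then have "phi_pinv lam t \<in> {0<..<1}" using pinv_props[OF assms(1,2), of t] assms by auto
  then have "dphi lam (phi_pinv lam t) < 0" using dphi_neg[OF assms(1,2)] by auto
  then show ?thesis using True by (simp add: G_def)
qed (simp add: G_def)

lemma pinv_anti:
  assumes "-1 < lam" "lam \<le> 0" "0 \<le> r" "r \<le> s" "s < phi lam 0"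
  shows "phi_pinv lam s \<le> phi_pinv lam r"
proof (rule ccontr)
  assume "\<not> ?thesis"
  then have "phi lam (phi_pinv lam s) < phi lam (phi_pinv lam r)"
    using phi_strict[OF assms(1,2), of "phi_pinv lam r" "phi_pinv lam s"] pinv_props[OF assms(1,2), of r] pinv_props[OF assms(1,2), of s] assms
    by auto
  then show False using pinv_props[OF assms(1,2), of r] pinv_props[OF assms(1,2), of s] assms by auto
qed

lemma G_anti:
  assumes "-1 < lam" "lam \<le> 0" "0 < r" "r \<le> s"
  shows "G lam s \<le> G lam r"
proof (cases "s < phi lam 0")
  case True
  have pr: "phi_pinv lam r \<in> {0<..<1}" "phi_pinv lam s \<in> {0<..<1}"
    using pinv_props[OF assms(1,2), of r] pinv_props[OF assms(1,2), of s] assms True by auto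
  have "phi_pinv lam s \<le> phi_pinv lam r" using pinv_anti[OF assms(1,2)] assms True by auto
  then have "dphi lam (phi_pinv lam s) \<le> dphi lam (phi_pinv lam r)" using dphi_mono[OF assms(1,2)] pr by auto
  moreover have "dphi lam (phi_pinv lam r) < 0" using dphi_neg[OF assms(1,2)] pr by auto
  ultimately have "inverse (dphi lam (phi_pinv lam r)) \<le> inverse (dphi lam (phi_pinv lam s))"
    by (rule le_imp_inverse_le_neg)
  then show ?thesis using True assms by (simp add: G_def)
next
  case False
  then show ?thesis using G_nonneg[OF assms(1,2,3)] by (simp add: G_def)
qed

lemma glue:
  fixes f :: "real \<Rightarrow> real"
  assumes c: "0 < c" and cv: "convex_on {0<..<c} f" and z: "\<And>t. c \<le> t \<Longrightarrow> f t = 0"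
    and nn: "\<And>t. 0 < t \<Longrightarrow> t < c \<Longrightarrow> 0 \<le> f t" and lim: "(f \<longlongrightarrow> 0) (at_left c)"
  shows "convex_on {0<..} f"
proof (rule convex_on_linorderI)
  show "convex {0::real<..}" by (simp add: convex_real_interval)
  fix t x y :: real
  assume t: "0 < t" "t < 1" and x: "x \<in> {0<..}" and y: "y \<in> {0<..}" and xy: "x < y"
  define zz where "zz = (1 - t) * x + t * y"
  have e1: "zz - x = t * (y - x)" by (simp add: zz_def algebra_simps)
  have e2: "y - zz = (1 - t) * (y - x)" by (simp add: zz_def algebra_simps)
  have "0 < zz - x" unfolding e1 using t xy by simp
  moreover have "0 < y - zz" unfolding e2 using t xy by simp
  ultimately have zx: "x < zz" "zz < y" by auto
  have "f zz \<le> (1 - t) * f x + t * f y"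
  proof (cases "y < c")
    case True
    show ?thesis unfolding zz_def using convex_onD[OF cv, of t x y] t x y True xy by auto
  next
    case yc: False
    show ?thesis
    proof (cases "c \<le> x")
      case True then show ?thesis using z zx yc by simp
    next
      case xc: False
      have fy: "f y = 0" using z yc by simp
      have fx: "0 \<le> f x" using nn x xc by simp
      show ?thesis
      proof (cases "c \<le> zz")
        case True then show ?thesis using z fy fx t by simp
      next
        case zc: False
        define h where "h w = (1 - (zz - x) / (w - x)) * f x + (zz - x) / (w - x) * f w" for w
        have hl: "(h \<longlongrightarrow> (1 - (zz - x) / (c - x)) * f x + (zz - x) / (c - x) * 0) (at_left c)"
          unfolding h_def using xc by (intro tendsto_intros lim) auto
        have ev: "\<forall>\<^sub>F w in at_left c. f zz \<le> h w"
        proof (rule eventually_mono[OF eventually_at_left_real[of zz c]])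
          show "zz < c" using zc by simp
          fix w assume w: "w \<in> {zz<..<c}"
          define s where "s = (zz - x) / (w - x)"
          have s: "0 \<le> s" "s \<le> 1" using w zx by (auto simp: s_def)
          have sw: "s * (w - x) = zz - x" using w zx by (simp add: s_def)
          have "zz = (1 - s) * x + s * w" using sw by (simp add: algebra_simps)
          then have "f zz = f ((1 - s) *\<^sub>R x + s *\<^sub>R w)" by simp
          also have "\<dots> \<le> (1 - s) * f x + s * f w"
            using convex_onD[OF cv s] x w zx xc by auto
          finally show "f zz \<le> h w" by (simp add: h_def s_def)
        qed
        have "f zz \<le> (1 - (zz - x) / (c - x)) * f x"
          using tendsto_lowerbound[OF hl ev] by simp
        also have "\<dots> \<le> (1 - t) * f x"
        proof (rule mult_right_mono[OF _ fx])
          have "zz - x = t * (y - x)" by (simp add: zz_def algebra_simps)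
          also have "\<dots> \<ge> t * (c - x)" using t yc by (intro mult_left_mono) auto
          finally have "t \<le> (zz - x) / (c - x)" using xc by (simp add: field_simps)
          then show "1 - (zz - x) / (c - x) \<le> 1 - t" by simp
        qed
        finally show ?thesis using fy by simp
      qed
    qed
  qed
  then show "f ((1 - t) *\<^sub>R x + t *\<^sub>R y) \<le> (1 - t) * f x + t * f y" by (simp add: zz_def)
qed


lemma convex_on_cong':
  assumes "convex_on A g" "\<And>x. x \<in> A \<Longrightarrow> f x = g x"
  shows "convex_on A f"
  using assms unfolding convex_on_def convex_def by auto

lemma dphi_deriv:
  assumes "lam \<noteq> 0" "0 < x"
  shows "(dphi lam has_real_derivative x powr (lam - 1)) (at x)"
proof -
  have e: "dphi lam = (\<lambda>x. (x powr lam - 1) / lam)" using assms by (auto simp: dphi_def)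
  show ?thesis unfolding e using assms by (auto intro!: derivative_eq_intros)
qed

definition K2 :: "real \<Rightarrow> real \<Rightarrow> real" where
  "K2 lam x = lam ^ 3 * (x powr (-2 * lam - 1) / (1 - x powr (-lam)) ^ 3)"

lemma K2_eq:
  assumes "lam < 0" "0 < x" "x < 1"
  shows "x powr (lam - 1) / (dphi lam x) ^ 3 = K2 lam x"
proof -
  define q where "q = x powr lam"
  define p where "p = x powr (-lam)"
  define r where "r = x powr (-1)"
  have qp: "q * p = 1" using assms by (simp add: q_def p_def powr_minus)
  have a1: "x powr (lam - 1) = q * r" unfolding q_def r_def using powr_add[of x lam "-1"] by simp
  have ee: "-2*lam-1 = (-lam) + ((-lam) + (-1))" by simp
  have a2: "x powr (-2 * lam - 1) = p * p * r"
    unfolding p_def r_def ee powr_add by (simp add: mult.assoc)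
  have p1: "p < 1" using powr_less_mono2[of "-lam" x 1] assms by (simp add: p_def)
  have q0: "q \<noteq> 0" using assms by (simp add: q_def)
  have qq: "q - 1 = q * (1 - p)" using qp by (simp add: algebra_simps)
  have d: "dphi lam x = q * (1 - p) / lam" using assms by (simp add: dphi_def q_def[symmetric] qq)
  have "x powr (lam - 1) / (dphi lam x) ^ 3 = q * r / (q * (1 - p) / lam) ^ 3" by (simp add: a1 d)
  also have "\<dots> = lam ^ 3 * (p * p * r / (1 - p) ^ 3)"
  proof -
    have "0 < p" using assms by (simp add: p_def)
    moreover have qd: "q = 1 / p" using qp \<open>0 < p\<close> by (simp add: field_simps)
    ultimately show ?thesis unfolding qd using p1 assms by (simp add: field_simps power3_eq_cube)
  qed
  finally show ?thesis unfolding K2_def a2 p_def[symmetric] .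
qed

lemma K2_anti:
  assumes "lam \<le> -1/2" "0 < x" "x \<le> y" "y < 1"
  shows "K2 lam y \<le> K2 lam x"
proof -
  have l: "lam < 0" using assms by simp
  have px: "0 < x powr (-lam)" using assms by simp
  have pxy: "x powr (-lam) \<le> y powr (-lam)" using assms l by (intro powr_mono2) auto
  have py: "y powr (-lam) < 1" using powr_less_mono2[of "-lam" y 1] assms l by simp
  have A: "x powr (-2 * lam - 1) \<le> y powr (-2 * lam - 1)" using assms by (intro powr_mono2) auto
  have B: "(1 - y powr (-lam)) ^ 3 \<le> (1 - x powr (-lam)) ^ 3" using pxy py by (intro power_mono) auto
  have B0: "0 < (1 - y powr (-lam)) ^ 3" using py by simp
  have "x powr (-2 * lam - 1) / (1 - x powr (-lam)) ^ 3 \<le> y powr (-2 * lam - 1) / (1 - y powr (-lam)) ^ 3"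
    by (rule frac_le[OF _ A B0 B]) simp
  moreover have "lam ^ 3 < 0" using l mult_pos_neg[of "lam*lam" lam] mult_neg_neg[of lam lam] by (simp add: power3_eq_cube)
  ultimately show ?thesis unfolding K2_def by (intro mult_left_mono_neg) auto
qed

lemma G_deriv:
  assumes "-1 < lam" "lam < 0" "0 < t" "t < phi lam 0"
  shows "(G lam has_real_derivative K2 lam (phi_pinv lam t)) (at t)"
proof -
  let ?x = "phi_pinv lam t"
  have x: "0 < ?x" "?x < 1" using pinv_props[of lam t] assms by auto
  let ?d = "dphi lam ?x"
  have d0: "?d \<noteq> 0" using dphi_neg[of lam ?x] assms x by auto
  have D1: "((\<lambda>s. dphi lam (phi_pinv lam s)) has_real_derivative ?x powr (lam - 1) * inverse ?d) (at t)"
    by (rule DERIV_chain2[OF dphi_deriv pinv_deriv_in]) (use assms x in auto)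
  have D2: "((\<lambda>s. - inverse (dphi lam (phi_pinv lam s))) has_real_derivative
       - (- (?x powr (lam - 1) * inverse ?d * inverse (?d ^ Suc (Suc 0))))) (at t)"
    by (intro DERIV_minus DERIV_inverse_fun[OF D1 d0])
  have eq: "- (- (?x powr (lam - 1) * inverse ?d * inverse (?d ^ Suc (Suc 0)))) = K2 lam ?x"
    using K2_eq[of lam ?x] assms x d0 by (simp add: field_simps power3_eq_cube)
  show ?thesis
    by (rule has_field_derivative_transform_within_open[OF D2[unfolded eq], of "{..<phi lam 0}"])
       (use assms in \<open>auto simp: G_def\<close>)
qed

lemma G_convex_in:
  assumes "-1 < lam" "lam \<le> -1/2"
  shows "convex_on {0<..<phi lam 0} (G lam)"
proof (rule convex_on_realI[where f' = "\<lambda>t. K2 lam (phi_pinv lam t)"])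
  show "connected {0<..<phi lam 0}" by simp
  show "\<And>x. x \<in> {0<..<phi lam 0} \<Longrightarrow> (G lam has_real_derivative K2 lam (phi_pinv lam x)) (at x)"
    using G_deriv assms by auto
  fix x y assume xy: "x \<in> {0<..<phi lam 0}" "y \<in> {0<..<phi lam 0}" "x \<le> y"
  have "phi_pinv lam y \<le> phi_pinv lam x" using pinv_anti[of lam x y] assms xy by auto
  moreover have "0 < phi_pinv lam y" "phi_pinv lam x < 1" using pinv_props[of lam] assms xy by auto
  ultimately show "K2 lam (phi_pinv lam x) \<le> K2 lam (phi_pinv lam y)"
    using K2_anti[OF assms(2)] by auto
qed

lemma M_lim:
  assumes "lam < 0"
  shows "((\<lambda>x. - inverse (dphi lam x)) \<longlongrightarrow> 0) (at_right 0)"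
proof -
  have ev: "\<forall>\<^sub>F x in at_right (0::real). 0 \<le> x"
    by (rule eventually_mono[OF eventually_at_right_less]) auto
  have lim: "((\<lambda>x. - lam * x powr (-lam) / (1 - x powr (-lam))) \<longlongrightarrow> - lam * 0 powr (-lam) / (1 - 0 powr (-lam))) (at_right 0)"
    using assms ev by (intro tendsto_intros) auto
  have ev2: "\<forall>\<^sub>F x in at_right (0::real). - lam * x powr (-lam) / (1 - x powr (-lam)) = - inverse (dphi lam x)"
  proof (rule eventually_mono[OF eventually_at_right_less], goal_cases)
    case (1 x)
    define q where "q = x powr lam"
    define p where "p = x powr (-lam)"
    have qp: "q * p = 1" using 1 by (simp add: q_def p_def powr_minus)
    have q0: "q \<noteq> 0" "p \<noteq> 0" using 1 by (auto simp: q_def p_def)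
    have "q = 1 / p" using qp q0 by (simp add: field_simps)
    then have "dphi lam x = (1 / p - 1) / lam" using assms by (simp add: dphi_def q_def)
    moreover have "- lam * p / (1 - p) = - inverse ((1 / p - 1) / lam)"
      using q0 assms by (cases "p = 1") (auto simp: field_simps)
    ultimately show ?case unfolding p_def by simp
  qed
  show ?thesis using Lim_transform_eventually[OF lim ev2] assms by simp
qed

lemma G_left:
  assumes "-1 < lam" "lam < 0"
  shows "(G lam \<longlongrightarrow> 0) (at_left (phi lam 0))"
proof -
  have lim: "((\<lambda>s. - inverse (dphi lam (phi_pinv lam s))) \<longlongrightarrow> 0) (at_left (phi lam 0))"
    by (rule filterlim_compose[OF M_lim[OF assms(2)] pinv_left_lim]) (use assms in auto)
  have ev: "\<forall>\<^sub>F s in at_left (phi lam 0). - inverse (dphi lam (phi_pinv lam s)) = G lam s"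
    by (rule eventually_mono[OF eventually_at_left_real[OF c_pos[OF assms(1)]]]) (auto simp: G_def)
  show ?thesis using Lim_transform_eventually[OF lim ev] .
qed

lemma G_convex:
  assumes "-1 < lam" "lam \<le> -1/2"
  shows "convex_on {0<..} (G lam)"
proof (rule glue[OF c_pos[OF assms(1)] G_convex_in[OF assms]])
  show "\<And>t. phi lam 0 \<le> t \<Longrightarrow> G lam t = 0" by (simp add: G_def)
  show "\<And>t. 0 < t \<Longrightarrow> t < phi lam 0 \<Longrightarrow> 0 \<le> G lam t" using G_nonneg[of lam] assms by auto
  show "(G lam \<longlongrightarrow> 0) (at_left (phi lam 0))" using G_left assms by auto
qed


lemma c_minus_phi:
  assumes "-1 < lam" "lam \<noteq> 0" "0 < x"
  shows "phi lam 0 - phi lam x = x * ((1 + lam) - x powr lam) / (lam * (lam + 1))"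
proof -
  have xp: "x powr (lam + 1) = x * x powr lam" using assms by (simp add: powr_add abs_of_pos)
  have "phi lam 0 - phi lam x = ((0 powr (lam+1) - 0 + lam*(1-0)) - (x powr (lam+1) - x + lam*(1-x)))/(lam*(lam+1))"
    unfolding phi_eq_nz[OF assms(2)] by (rule diff_divide_distrib[symmetric])
  also have "\<dots> = ((1 + lam) * x - x powr (lam + 1)) / (lam * (lam + 1))" by (simp add: algebra_simps)
  also have "\<dots> = x * ((1 + lam) - x powr lam) / (lam * (lam + 1))" unfolding xp by (simp add: algebra_simps)
  finally show ?thesis .
qed

lemma R_lower:
  assumes "-1 < lam" "lam < 0" "0 < x" "x < 1"
  shows "lam ^ 2 * (lam + 1) * inverse (x powr (2 * lam + 1))
     \<le> - inverse (dphi lam x) / (phi lam 0 - phi lam x)"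
proof -
  define q where "q = x powr lam"
  define a where "a = - lam"
  define b where "b = lam + 1"
  have a: "0 < a" and b: "0 < b" "b < 1" using assms by (auto simp: a_def b_def)
  have q1: "1 < q" using powr_less_mono2_neg[OF assms(2) assms(3,4)] by (simp add: q_def)
  have e1: "- inverse (dphi lam x) = a / (q - 1)"
    using assms by (simp add: dphi_def q_def[symmetric] a_def divide_simps)
  have e2: "phi lam 0 - phi lam x = x * (q - b) / (a * b)"
  proof -
    have "x * (q - b) / (a * b) = (- (x * ((1 + lam) - q))) / (- (lam * (lam + 1)))"
      by (simp add: a_def b_def algebra_simps)
    also have "\<dots> = phi lam 0 - phi lam x"
      unfolding minus_divide_divide using c_minus_phi[OF assms(1) _ assms(3)] assms by (simp add: q_def)
    finally show ?thesis by simp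
  qed
  have e3: "x powr (2 * lam + 1) = x * (q * q)"
  proof -
    have ee: "2 * lam + 1 = lam + (lam + 1)" by simp
    show ?thesis unfolding ee powr_add q_def using assms by simp
  qed
  have L: "lam ^ 2 * (lam + 1) * inverse (x powr (2 * lam + 1)) = a * a * b / (x * (q * q))"
    unfolding e3 by (simp add: a_def b_def power2_eq_square divide_inverse)
  have R: "- inverse (dphi lam x) / (phi lam 0 - phi lam x) = a * a * b / (x * ((q - 1) * (q - b)))"
    unfolding e1 e2 using a b q1 assms by (simp add: field_simps)
  have "x * ((q - 1) * (q - b)) \<le> x * (q * q)"
    using q1 b assms by (intro mult_left_mono mult_mono) auto
  moreover have "0 < x * ((q - 1) * (q - b))" using q1 b assms by simp
  ultimately show ?thesis unfolding L R using a b
    by (intro divide_left_mono) auto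
qed

lemma R_big:
  assumes "-1/2 < lam" "lam \<le> 0"
  shows "filterlim (\<lambda>x. - inverse (dphi lam x) / (phi lam 0 - phi lam x)) at_top (at_right 0)"
proof (cases "lam = 0")
  case True
  have "filterlim (\<lambda>x::real. - inverse (ln x) / (1 - (1 - x + x * ln x))) at_top (at_right 0)"
    by real_asymp
  then show ?thesis unfolding True phi_eq_z dphi_def by simp
next
  case False
  then have l: "lam < 0" using assms by simp
  have ev: "\<forall>\<^sub>F x in at_right (0::real). 0 \<le> x"
    by (rule eventually_mono[OF eventually_at_right_less]) auto
  have t0: "((\<lambda>x. x powr (2 * lam + 1)) \<longlongrightarrow> 0 powr (2 * lam + 1)) (at_right (0::real))"
    using assms ev by (intro tendsto_intros) auto
  have inv: "filterlim (\<lambda>x. inverse (x powr (2 * lam + 1))) at_top (at_right (0::real))"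
    by (rule filterlim_inverse_at_top) (use t0 assms in \<open>auto intro: eventually_mono[OF eventually_at_right_less]\<close>)
  have big: "filterlim (\<lambda>x. lam ^ 2 * (lam + 1) * inverse (x powr (2 * lam + 1))) at_top (at_right (0::real))"
    by (rule filterlim_tendsto_pos_mult_at_top[OF tendsto_const _ inv]) (use l assms in auto)
  show ?thesis
  proof (rule filterlim_at_top_mono[OF big])
    show "\<forall>\<^sub>F x in at_right 0. lam\<^sup>2 * (lam + 1) * inverse (x powr (2 * lam + 1))
       \<le> - inverse (dphi lam x) / (phi lam 0 - phi lam x)"
      by (rule eventually_mono[OF eventually_at_right_real[of 0 1]]) (use R_lower l assms in auto)
  qed
qed


lemma G_nonconvex:
  assumes "-1/2 < lam" "lam \<le> 0"
  shows "\<not> convex_on {0<..} (G lam)"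
proof
  assume cv: "convex_on {0<..} (G lam)"
  have l1: "-1 < lam" using assms by simp
  define c where "c = phi lam 0"
  define t0 where "t0 = phi lam (1/2)"
  have t0: "0 < t0" "t0 < c" using phi_range[OF l1 assms(2), of "1/2"] by (auto simp: t0_def c_def)
  define K where "K = G lam t0 / (c - t0)"
  have bound: "- inverse (dphi lam x) / (phi lam 0 - phi lam x) \<le> K" if x: "0 < x" "x < 1/2" for x
  proof -
    define s where "s = phi lam x"
    have s: "t0 < s" "s < c" using phi_strict[OF l1 assms(2), of x "1/2"] phi_range[OF l1 assms(2), of x] x
      by (auto simp: s_def t0_def c_def)
    have Gs: "G lam s = - inverse (dphi lam x)"
      using s x pinv_phi[OF l1 assms(2), of x] by (simp add: G_def s_def c_def)
    define u where "u = (s - t0) / (c - t0)"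
    have u: "0 \<le> u" "u \<le> 1" using s t0 by (auto simp: u_def)
    have uu: "u * (c - t0) = s - t0" using s t0 by (simp add: u_def)
    have su: "s = (1 - u) * t0 + u * c" using uu by (simp add: algebra_simps)
    have "G lam s \<le> (1 - u) * G lam t0 + u * G lam c"
      using convex_onD[OF cv u, of t0 c] t0 su by simp
    also have "G lam c = 0" by (simp add: G_def c_def)
    also have "1 - u = (c - s) / (c - t0)" using t0 by (simp add: u_def field_simps)
    finally have "G lam s \<le> (c - s) * K" by (simp add: K_def)
    then have "G lam s / (c - s) \<le> K" using s by (simp add: divide_simps mult.commute)
    then show ?thesis using Gs by (simp add: s_def c_def)
  qed
  have ev: "\<forall>\<^sub>F x in at_right (0::real). K < - inverse (dphi lam x) / (phi lam 0 - phi lam x)"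
    using R_big[OF assms] by (simp add: filterlim_at_top_dense)
  have ev2: "\<forall>\<^sub>F x in at_right (0::real). x \<in> {0<..<1/2}"
    by (rule eventually_at_right_real) simp
  obtain x where "K < - inverse (dphi lam x) / (phi lam 0 - phi lam x)" "x \<in> {0<..<1/2}"
    using eventually_happens'[OF _ eventually_conj[OF ev ev2]] by auto
  then show False using bound by fastforce
qed

theorem lemma3:
  fixes lam :: real
  assumes "-1 < lam" and "lam \<le> 0"
  shows "antimono_on {0<..} (\<lambda>t. - deriv (phi_pinv lam) t)
       \<and> (lam \<le> -1/2 \<longrightarrow> convex_on {0<..} (\<lambda>t. - deriv (phi_pinv lam) t))
       \<and> (-1/2 < lam \<longrightarrow> \<not> convex_on {0<..} (\<lambda>t. - deriv (phi_pinv lam) t))"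
proof (intro conjI impI)
  have eq: "\<And>t. t \<in> {0<..} \<Longrightarrow> - deriv (phi_pinv lam) t = G lam t"
    using deriv_eq[OF assms] by auto
  show "antimono_on {0<..} (\<lambda>t. - deriv (phi_pinv lam) t)"
    unfolding monotone_on_def using eq G_anti[OF assms] by auto
  show "convex_on {0<..} (\<lambda>t. - deriv (phi_pinv lam) t)" if "lam \<le> -1/2"
    using convex_on_cong'[OF G_convex[OF assms(1) that] eq] by simp
  show "\<not> convex_on {0<..} (\<lambda>t. - deriv (phi_pinv lam) t)" if "-1/2 < lam"
  proof
    assume "convex_on {0<..} (\<lambda>t. - deriv (phi_pinv lam) t)"
    then have "convex_on {0<..} (G lam)" using convex_on_cong'[of "{0<..}" "\<lambda>t. - deriv (phi_pinv lam) t" "G lam"] eq by auto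
    then show False using G_nonconvex[OF that assms(2)] by simp
  qed
qed

end
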